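(* Let $P \in S$ have degree $n \geq 1$ in $x$, and suppose that the degree in $x$ of every nonzero element of $C_S(P)$ is divisible by $n$. Then $C_S(P) = K[P]$.
   Context: Standing conventions: $K$ is a field, $R = K[y]$, $\sigma$ is a $K$-algebra endomorphism of $R$ with $\deg_y(\sigma(y)) > 1$, and $\delta$ is a $K$-linear $\sigma$-derivation of $R$ ($\delta(ab) = \sigma(a)\delta(b) + \delta(a)b$). $S = R[x;\sigma,\delta]$ is the Ore extension (polynomials $\sum r_i x^i$, $r_i\in R$, with $xr = \sigma(r)x + \delta(r)$). $C_S(P)$ is the centralizer of $P$ in $S$, and $K[P] = \{\sum_i c_i P^i : c_i \in K\}$. *)

theory Defs
  imports "HOL-Computational_Algebra.Polynomial"
begin

text \<open>Elements of the Ore extension S = R[x; sigma, delta], R = K[y], are represented as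
  polynomials in x with coefficients in R, i.e. of type 'k poly poly:
  the element sum r_i x^i has coeff i = r_i.  Degree in x is the outer degree.\<close>

text \<open>Left multiplication by x:  x (r x^i) = sigma(r) x^(i+1) + delta(r) x^i.\<close>
definition ore_x :: "('k::field poly \<Rightarrow> 'k poly) \<Rightarrow> ('k poly \<Rightarrow> 'k poly)
    \<Rightarrow> 'k poly poly \<Rightarrow> 'k poly poly" where
  "ore_x \<sigma> \<delta> f = pCons 0 (map_poly \<sigma> f) + map_poly \<delta> f"

definition ore_mult :: "('k::field poly \<Rightarrow> 'k poly) \<Rightarrow> ('k poly \<Rightarrow> 'k poly)
    \<Rightarrow> 'k poly poly \<Rightarrow> 'k poly poly \<Rightarrow> 'k poly poly" where
  "ore_mult \<sigma> \<delta> f g = (\<Sum>i\<le>degree f. smult (coeff f i) ((ore_x \<sigma> \<delta> ^^ i) g))"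

primrec ore_pow :: "('k::field poly \<Rightarrow> 'k poly) \<Rightarrow> ('k poly \<Rightarrow> 'k poly)
    \<Rightarrow> 'k poly poly \<Rightarrow> nat \<Rightarrow> 'k poly poly" where
  "ore_pow \<sigma> \<delta> P 0 = 1"
| "ore_pow \<sigma> \<delta> P (Suc n) = ore_mult \<sigma> \<delta> P (ore_pow \<sigma> \<delta> P n)"

definition K_alg_endo :: "('k::field poly \<Rightarrow> 'k poly) \<Rightarrow> bool" where
  "K_alg_endo \<sigma> \<longleftrightarrow> (\<forall>a b. \<sigma> (a + b) = \<sigma> a + \<sigma> b) \<and> (\<forall>a b. \<sigma> (a * b) = \<sigma> a * \<sigma> b)
     \<and> \<sigma> 1 = 1 \<and> (\<forall>c a. \<sigma> (smult c a) = smult c (\<sigma> a))"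

definition K_sigma_derivation :: "('k::field poly \<Rightarrow> 'k poly) \<Rightarrow> ('k poly \<Rightarrow> 'k poly) \<Rightarrow> bool" where
  "K_sigma_derivation \<sigma> \<delta> \<longleftrightarrow> (\<forall>a b. \<delta> (a + b) = \<delta> a + \<delta> b)
     \<and> (\<forall>c a. \<delta> (smult c a) = smult c (\<delta> a))
     \<and> (\<forall>a b. \<delta> (a * b) = \<sigma> a * \<delta> b + \<delta> a * b)"

definition centralizer :: "('k::field poly \<Rightarrow> 'k poly) \<Rightarrow> ('k poly \<Rightarrow> 'k poly)
    \<Rightarrow> 'k poly poly \<Rightarrow> 'k poly poly set" where
  "centralizer \<sigma> \<delta> P = {Q. ore_mult \<sigma> \<delta> Q P = ore_mult \<sigma> \<delta> P Q}"

text \<open>K[P] = { sum_i c_i P^i : c_i in K }; a scalar c in K is the element [:[:c:]:] of S,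
  and c * P^i = smult [:c:] P^i.\<close>
definition K_poly_in :: "('k::field poly \<Rightarrow> 'k poly) \<Rightarrow> ('k poly \<Rightarrow> 'k poly)
    \<Rightarrow> 'k poly poly \<Rightarrow> 'k poly poly set" where
  "K_poly_in \<sigma> \<delta> P = {Q. \<exists>(c::nat \<Rightarrow> 'k) N. Q = (\<Sum>i\<le>N. smult [:c i:] (ore_pow \<sigma> \<delta> P i))}"

end

theory Submission
  imports Defs
begin



lemma smult_sumR: "smult a (\<Sum>i\<in>A. f i) = (\<Sum>i\<in>A. smult a (f i))"
  by (induction A rule: infinite_finite_induct) (auto simp: smult_add_right)

locale ore =
  fixes \<sigma> \<delta> :: "'k::field poly \<Rightarrow> 'k poly"
  assumes sadd: "\<And>a b. \<sigma> (a+b) = \<sigma> a + \<sigma> b" and smul: "\<And>a b. \<sigma> (a*b) = \<sigma> a * \<sigma> b"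
    and s1: "\<sigma> 1 = 1" and ssm: "\<And>c a. \<sigma> (smult c a) = smult c (\<sigma> a)"
    and dadd: "\<And>a b. \<delta> (a+b) = \<delta> a + \<delta> b" and dsm: "\<And>c a. \<delta> (smult c a) = smult c (\<delta> a)"
    and dmul: "\<And>a b. \<delta> (a*b) = \<sigma> a * \<delta> b + \<delta> a * b"
    and sdeg: "degree (\<sigma> [:0,1:]) > 1"
begin

lemma s0[simp]: "\<sigma> 0 = 0" using sadd[of 0 0] by (metis add_0 add_cancel_right_right)
lemma d0[simp]: "\<delta> 0 = 0" using dadd[of 0 0] by (metis add_0 add_cancel_right_right)
lemma sminus: "\<sigma> (- a) = - \<sigma> a" using sadd[of a "-a"] by (metis add.commute eq_neg_iff_add_eq_0 s0 add.right_inverse)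
lemma dminus: "\<delta> (- a) = - \<delta> a" using dadd[of a "-a"] by (metis add.commute eq_neg_iff_add_eq_0 d0 add.right_inverse)
lemma sdiff: "\<sigma> (a - b) = \<sigma> a - \<sigma> b" using sadd[of a "-b"] sminus[of b] by simp
lemma ddiff: "\<delta> (a - b) = \<delta> a - \<delta> b" using dadd[of a "-b"] dminus[of b] by simp
lemma sconst[simp]: "\<sigma> [:c:] = [:c:]" using ssm[of c 1] s1 by simp
lemma d1: "\<delta> 1 = 0"
proof -
  have "\<delta> (1*1) = \<sigma> 1 * \<delta> 1 + \<delta> 1 * 1" by (rule dmul)
  then have "\<delta> 1 = \<delta> 1 + \<delta> 1" by (simp only: s1 mult_1_left mult_1_right)
  then show ?thesis by (simp only: add_cancel_right_right)
qed
lemma dconst[simp]: "\<delta> [:c:] = 0" using dsm[of c 1] d1 by simp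

lemma spcomp: "\<sigma> r = pcompose r (\<sigma> [:0,1:])"
proof (induction r)
  case 0 then show ?case by simp
next
  case (pCons a p)
  have "pCons a p = [:a:] + [:0,1:] * p" by simp
  then have "\<sigma> (pCons a p) = [:a:] + \<sigma> [:0,1:] * \<sigma> p" by (metis sadd smul sconst)
  then show ?case using pCons by (simp add: pcompose_pCons)
qed

lemma sdegree: "degree (\<sigma> r) = degree r * degree (\<sigma> [:0,1:])"
  using degree_pcompose[of r "\<sigma> [:0,1:]"] spcomp[of r] by simp

lemma snz: "r \<noteq> 0 \<Longrightarrow> \<sigma> r \<noteq> 0"
  using spcomp[of r] pcompose_eq_0[of r "\<sigma> [:0,1:]"] sdeg by auto

lemma spow_add: "(\<sigma>^^i) (a+b) = (\<sigma>^^i) a + (\<sigma>^^i) b"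
  by (induction i) (auto simp: sadd)
lemma spow_0[simp]: "(\<sigma>^^i) 0 = 0"
  by (induction i) auto
lemma spow_diff: "(\<sigma>^^i) (a-b) = (\<sigma>^^i) a - (\<sigma>^^i) b"
  by (induction i) (auto simp: sdiff)
lemma spow_sm: "(\<sigma>^^i) (smult c a) = smult c ((\<sigma>^^i) a)"
  by (induction i) (auto simp: ssm)
lemma spow_nz: "r \<noteq> 0 \<Longrightarrow> (\<sigma>^^i) r \<noteq> 0"
  by (induction i) (auto simp: snz)
lemma spow_degree: "degree ((\<sigma>^^i) r) = degree (\<sigma> [:0,1:]) ^ i * degree r"
proof (induction i)
  case 0 then show ?case by simp
next
  case (Suc i)
  have "degree ((\<sigma>^^Suc i) r) = degree ((\<sigma>^^i) r) * degree (\<sigma> [:0,1:])"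
    using sdegree[of "(\<sigma>^^i) r"] by simp
  then show ?case unfolding Suc.IH by (simp only: power_Suc mult.commute mult.left_commute)
qed

abbreviation X where "X \<equiv> ore_x \<sigma> \<delta>"
abbreviation M where "M \<equiv> ore_mult \<sigma> \<delta>"

lemma ox_coeff: "coeff (X h) j = (if j = 0 then 0 else \<sigma> (coeff h (j-1))) + \<delta> (coeff h j)"
  by (cases j) (auto simp: ore_x_def coeff_map_poly)

lemma ox_add: "X (a + b) = X a + X b"
  by (rule poly_eqI) (simp add: ox_coeff sadd dadd)
lemma ox_0[simp]: "X 0 = 0"
  by (rule poly_eqI) (simp add: ox_coeff)
lemma ox_diff: "X (a - b) = X a - X b"
  by (rule poly_eqI) (simp add: ox_coeff sdiff ddiff)
lemma ox_smult: "X (smult r h) = smult (\<sigma> r) (X h) + smult (\<delta> r) h"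
  by (rule poly_eqI) (simp add: ox_coeff smul dmul algebra_simps)
lemma ox_const: "X (smult [:c:] h) = smult [:c:] (X h)"
  by (simp add: ox_smult)

lemma oxp_add: "(X^^i) (a + b) = (X^^i) a + (X^^i) b"
  by (induction i) (auto simp: ox_add)
lemma oxp_0[simp]: "(X^^i) 0 = 0"
  by (induction i) auto
lemma oxp_diff: "(X^^i) (a - b) = (X^^i) a - (X^^i) b"
  by (induction i) (auto simp: ox_diff)
lemma oxp_const: "(X^^i) (smult [:c:] h) = smult [:c:] ((X^^i) h)"
  by (induction i) (auto simp: ox_const)

lemma om_bound: "degree f < N \<Longrightarrow> M f g = (\<Sum>i<N. smult (coeff f i) ((X^^i) g))"
  unfolding ore_mult_def
  by (rule sum.mono_neutral_left) (auto simp: coeff_eq_0)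

lemma om_add_left: "M (f1 + f2) g = M f1 g + M f2 g"
proof -
  define N where "N = Suc (max (degree f1) (degree f2))"
  have "degree (f1+f2) < N" unfolding N_def
    using degree_add_le_max[of f1 f2] by linarith
  then show ?thesis
    using om_bound[of f1 N] om_bound[of f2 N] om_bound[of "f1+f2" N]
    by (simp add: N_def smult_add_left sum.distrib)
qed

lemma om_smult_left: "M (smult r f) g = smult r (M f g)"
proof -
  have "degree (smult r f) < Suc (degree f)" using degree_smult_le[of r f] by simp
  then show ?thesis using om_bound[of f "Suc (degree f)"] om_bound[of "smult r f" "Suc (degree f)"]
    by (simp add: smult_sumR del: sum.lessThan_Suc)
qed

lemma om_0_left[simp]: "M 0 g = 0" by (simp add: ore_mult_def)

lemma om_diff_left: "M (f1 - f2) g = M f1 g - M f2 g"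
  using om_add_left[of "f1 - f2" f2 g] by (simp add: algebra_simps)

lemma om_sum_left: "M (\<Sum>i\<in>A. F i) g = (\<Sum>i\<in>A. M (F i) g)"
  by (induction A rule: infinite_finite_induct) (auto simp: om_add_left)

lemma om_add_right: "M f (g1 + g2) = M f g1 + M f g2"
  by (simp add: ore_mult_def oxp_add smult_add_right sum.distrib)
lemma om_diff_right: "M f (g1 - g2) = M f g1 - M f g2"
  by (simp add: ore_mult_def oxp_diff smult_diff_right sum_subtractf)
lemma om_const_right: "M f (smult [:c:] g) = smult [:c:] (M f g)"
  by (simp add: ore_mult_def oxp_const smult_sumR mult.commute)
lemma om_const_left: "M (smult [:c:] f) g = smult [:c:] (M f g)"
  by (rule om_smult_left)

end


context ore begin

lemma ox_sum: "X (\<Sum>i\<in>A. F i) = (\<Sum>i\<in>A. X (F i))"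
  by (induction A rule: infinite_finite_induct) (auto simp: ox_add)

lemma ox_left: "M (X g) h = X (M g h)"
proof -
  define D where "D = degree g"
  define N where "N = Suc (Suc D)"
  have "\<forall>j>Suc D. coeff (X g) j = 0"
    by (auto simp: ox_coeff D_def coeff_eq_0)
  then have "degree (X g) < N" unfolding N_def using degree_le by fastforce
  then have "M (X g) h = (\<Sum>j<N. smult (coeff (X g) j) ((X^^j) h))" by (rule om_bound)
  also have "\<dots> = (\<Sum>j<N. smult (if j = 0 then 0 else \<sigma> (coeff g (j-1))) ((X^^j) h))
       + (\<Sum>j<N. smult (\<delta> (coeff g j)) ((X^^j) h))"
    by (simp only: ox_coeff smult_add_left sum.distrib)
  also have "(\<Sum>j<N. smult (if j = 0 then 0 else \<sigma> (coeff g (j-1))) ((X^^j) h))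
      = (\<Sum>i<Suc D. smult (\<sigma> (coeff g i)) ((X^^Suc i) h))"
    unfolding N_def by (simp only: sum.lessThan_Suc_shift) simp
  also have "\<dots> = (\<Sum>i<N. smult (\<sigma> (coeff g i)) ((X^^Suc i) h))"
    unfolding N_def by (simp add: D_def coeff_eq_0 del: funpow.simps)
  also have "(\<Sum>i<N. smult (\<sigma> (coeff g i)) ((X^^Suc i) h)) + (\<Sum>j<N. smult (\<delta> (coeff g j)) ((X^^j) h))
      = (\<Sum>i<N. X (smult (coeff g i) ((X^^i) h)))"
    by (simp add: ox_smult sum.distrib)
  also have "\<dots> = X (\<Sum>i<N. smult (coeff g i) ((X^^i) h))"
    by (simp only: ox_sum)
  also have "(\<Sum>i<N. smult (coeff g i) ((X^^i) h)) = M g h"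
    by (rule om_bound[symmetric]) (simp add: N_def D_def)
  finally show ?thesis .
qed

lemma oxp_left: "M ((X^^i) g) h = (X^^i) (M g h)"
  by (induction i) (auto simp: ox_left)

lemma om_assoc: "M (M f g) h = M f (M g h)"
proof -
  have "M (M f g) h = (\<Sum>i\<le>degree f. M (smult (coeff f i) ((X ^^ i) g)) h)"
    unfolding ore_mult_def[of _ _ f g] by (rule om_sum_left)
  also have "\<dots> = M f (M g h)"
    unfolding ore_mult_def[of _ _ f "M g h"] by (simp add: om_smult_left oxp_left)
  finally show ?thesis .
qed

end


lemma arith_aux1:
  fixes e x y a b :: nat
  assumes "e \<ge> 2" "x < y" "a + e*x = x + b" "a + e*y = y + b"
  shows False
proof -
  obtain t where t: "y = x + t" "t > 0" using assms(2) less_imp_add_positive by blast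
  have "e*y = e*x + e*t" using t by (simp add: algebra_simps)
  then have "e*t = t" using assms(3,4) t by linarith
  moreover have "e*t \<ge> 2*t" using assms(1) by simp
  ultimately show False using t by linarith
qed

lemma arith_aux:
  fixes e x y a b :: nat
  assumes "e \<ge> 2" "a + e*x = x + b" "a + e*y = y + b"
  shows "x = y"
  using arith_aux1[OF assms(1) _ assms(2,3)] arith_aux1[OF assms(1) _ assms(3,2)]
  by (meson linorder_neqE_nat)

context ore begin

lemma oxp_top:
  assumes "\<forall>j>N. coeff h j = 0"
  shows "(\<forall>j>N+i. coeff ((X^^i) h) j = 0) \<and> coeff ((X^^i) h) (N+i) = (\<sigma>^^i) (coeff h N)"
proof (induction i)
  case 0 then show ?case using assms by simp
next
  case (Suc i)
  then show ?case by (auto simp: ox_coeff)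
qed

lemma om_coeff: "coeff (M f g) j = (\<Sum>i\<le>degree f. coeff f i * coeff ((X^^i) g) j)"
  by (simp add: ore_mult_def coeff_sum)

lemma om_top1: "j > degree f + degree g \<Longrightarrow> coeff (M f g) j = 0"
proof -
  assume j: "j > degree f + degree g"
  have "\<forall>j>degree g. coeff g j = 0" by (simp add: coeff_eq_0)
  note t = oxp_top[OF this]
  show ?thesis unfolding om_coeff
    by (rule sum.neutral) (use t j in auto)
qed

lemma om_top2: "coeff (M f g) (degree f + degree g) = lead_coeff f * (\<sigma>^^degree f) (lead_coeff g)"
proof -
  have "\<forall>j>degree g. coeff g j = 0" by (simp add: coeff_eq_0)
  note t = oxp_top[OF this]
  have "coeff (M f g) (degree f + degree g) = coeff f (degree f) * coeff ((X^^degree f) g) (degree g + degree f)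
     + (\<Sum>i\<in>{..degree f} - {degree f}. coeff f i * coeff ((X^^i) g) (degree f + degree g))"
    unfolding om_coeff by (subst sum.remove[of _ "degree f"]) (auto simp: add.commute)
  also have "(\<Sum>i\<in>{..degree f} - {degree f}. coeff f i * coeff ((X^^i) g) (degree f + degree g)) = 0"
    by (rule sum.neutral) (use t in auto)
  finally show ?thesis using t by simp
qed

lemma om_deg:
  assumes "f \<noteq> 0" "g \<noteq> 0"
  shows "M f g \<noteq> 0 \<and> degree (M f g) = degree f + degree g"
proof -
  have nz: "coeff (M f g) (degree f + degree g) \<noteq> 0"
    using assms spow_nz by (simp add: om_top2)
  then have "M f g \<noteq> 0" by auto
  moreover have "degree (M f g) \<le> degree f + degree g"
    by (rule degree_le) (simp add: om_top1)
  moreover have "degree f + degree g \<le> degree (M f g)" using nz by (rule le_degree)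
  ultimately show ?thesis by simp
qed

lemma om_1_left: "M 1 g = g"
  by (simp add: ore_mult_def)

lemma ox_monom: "X (monom 1 i) = monom 1 (Suc i)"
  by (rule poly_eqI) (auto simp: ox_coeff coeff_monom s1 d1)

lemma oxp_1: "(X^^i) 1 = monom 1 i"
proof (induction i)
  case 0 then show ?case by (simp add: monom_0 one_pCons)
next
  case (Suc i) then show ?case by (simp only: funpow.simps o_apply Suc.IH ox_monom)
qed

lemma om_1_right: "M f 1 = f"
  by (simp add: ore_mult_def oxp_1 smult_monom poly_as_sum_of_monoms)

lemma om_0_right[simp]: "M f 0 = 0"
  using om_diff_right[of f 0 0] by simp

lemma om_sum_right: "M f (\<Sum>i\<in>A. F i) = (\<Sum>i\<in>A. M f (F i))"
  by (induction A rule: infinite_finite_induct) (auto simp: om_add_right)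

abbreviation pw where "pw \<equiv> ore_pow \<sigma> \<delta>"

lemma pw_comm: "M (pw P k) P = M P (pw P k)"
proof (induction k)
  case 0 then show ?case by (simp add: om_1_left om_1_right)
next
  case (Suc k)
  then show ?case by (simp add: om_assoc)
qed

lemma pw_deg: "P \<noteq> 0 \<Longrightarrow> pw P k \<noteq> 0 \<and> degree (pw P k) = k * degree P"
  by (induction k) (auto simp: om_deg)

end


context ore begin

lemma lc_deg:
  assumes "p \<noteq> 0" "w \<noteq> 0" "p * (\<sigma>^^n) w = w * (\<sigma>^^m) p"
  shows "degree p + degree (\<sigma> [:0,1:]) ^ n * degree w = degree w + degree (\<sigma> [:0,1:]) ^ m * degree p"
proof -
  have "degree (p * (\<sigma>^^n) w) = degree (w * (\<sigma>^^m) p)" using assms(3) by simp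
  then show ?thesis using assms(1,2) spow_nz[of w n] spow_nz[of p m]
    by (simp add: degree_mult_eq spow_degree)
qed

lemma lc_unique:
  assumes n: "n \<ge> 1" and p: "p \<noteq> 0" and w: "w1 \<noteq> 0" "w2 \<noteq> 0"
    and e1: "p * (\<sigma>^^n) w1 = w1 * (\<sigma>^^m) p" and e2: "p * (\<sigma>^^n) w2 = w2 * (\<sigma>^^m) p"
  shows "\<exists>c. w1 = smult c w2"
proof -
  define D where "D = degree (\<sigma> [:0,1:])"
  have "D \<ge> 2" using sdeg D_def by simp
  have "D ^ 1 \<le> D ^ n" using \<open>D \<ge> 2\<close> n by (intro power_increasing) auto
  then have E: "D ^ n \<ge> 2" using \<open>D \<ge> 2\<close> by simp
  have d1: "degree p + D ^ n * degree w1 = degree w1 + D ^ m * degree p"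
    using lc_deg[OF p w(1) e1] D_def by simp
  have d2: "degree p + D ^ n * degree w2 = degree w2 + D ^ m * degree p"
    using lc_deg[OF p w(2) e2] D_def by simp
  have deq: "degree w1 = degree w2" by (rule arith_aux[OF E d1 d2])
  define c where "c = lead_coeff w1 / lead_coeff w2"
  define w3 where "w3 = w1 - smult c w2"
  have "p * (\<sigma>^^n) w3 = p * (\<sigma>^^n) w1 - smult c (p * (\<sigma>^^n) w2)"
    by (simp add: w3_def spow_diff spow_sm right_diff_distrib mult_smult_right)
  also have "\<dots> = w1 * (\<sigma>^^m) p - smult c (w2 * (\<sigma>^^m) p)" by (simp only: e1 e2)
  also have "\<dots> = w3 * (\<sigma>^^m) p" by (simp add: w3_def left_diff_distrib mult_smult_left)
  finally have e3: "p * (\<sigma>^^n) w3 = w3 * (\<sigma>^^m) p" .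
  have c3: "coeff w3 (degree w1) = 0"
    using w(2) deq by (simp add: w3_def c_def)
  have "w3 = 0"
  proof (rule ccontr)
    assume "w3 \<noteq> 0"
    have d3: "degree p + D ^ n * degree w3 = degree w3 + D ^ m * degree p"
      using lc_deg[OF p \<open>w3 \<noteq> 0\<close> e3] D_def by simp
    have "degree w3 = degree w1" by (rule arith_aux[OF E d3 d1])
    then show False using c3 \<open>w3 \<noteq> 0\<close> by (metis leading_coeff_0_iff)
  qed
  then show ?thesis unfolding w3_def by auto
qed

lemma pCons_const_add: "smult [:x + y:] R = smult [:x:] R + smult [:y:] R"
  by (simp add: smult_add_left[symmetric])

lemma Kadd:
  assumes "Q \<in> K_poly_in \<sigma> \<delta> P"
  shows "Q + smult [:c:] (pw P k) \<in> K_poly_in \<sigma> \<delta> P"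
proof -
  obtain a N where Q: "Q = (\<Sum>i\<le>N. smult [:a i:] (pw P i))"
    using assms unfolding K_poly_in_def by blast
  define N' where "N' = max N k"
  define a' where "a' i = (if i \<le> N then a i else 0) + (if i = k then c else 0)" for i
  have "(\<Sum>i\<le>N'. smult [:a' i:] (pw P i)) = (\<Sum>i\<le>N'. (if i \<le> N then smult [:a i:] (pw P i) else 0)
      + (if i = k then smult [:c:] (pw P i) else 0))"
    by (rule sum.cong) (auto simp: a'_def pCons_const_add)
  also have "\<dots> = (\<Sum>i\<le>N'. (if i \<le> N then smult [:a i:] (pw P i) else 0))
      + (\<Sum>i\<le>N'. (if i = k then smult [:c:] (pw P i) else 0))"
    by (rule sum.distrib)
  also have "(\<Sum>i\<le>N'. (if i \<le> N then smult [:a i:] (pw P i) else 0)) = Q"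
    unfolding Q by (rule sum.mono_neutral_cong_right) (auto simp: N'_def)
  also have "(\<Sum>i\<le>N'. (if i = k then smult [:c:] (pw P i) else 0)) = smult [:c:] (pw P k)"
    by (subst sum.delta) (auto simp: N'_def)
  finally have eq: "(\<Sum>i\<le>N'. smult [:a' i:] (pw P i)) = Q + smult [:c:] (pw P k)" .
  show ?thesis unfolding K_poly_in_def
    by (rule CollectI, rule exI[of _ a'], rule exI[of _ N'], rule eq[symmetric])
qed

lemma zero_K: "0 \<in> K_poly_in \<sigma> \<delta> P"
  unfolding K_poly_in_def by (rule CollectI, rule exI[of _ "\<lambda>_. 0"], rule exI[of _ 0]) simp

lemma K_sub_C: "K_poly_in \<sigma> \<delta> P \<subseteq> centralizer \<sigma> \<delta> P"
proof
  fix Q assume "Q \<in> K_poly_in \<sigma> \<delta> P"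
  then obtain a N where Q: "Q = (\<Sum>i\<le>N. smult [:a i:] (pw P i))"
    unfolding K_poly_in_def by blast
  show "Q \<in> centralizer \<sigma> \<delta> P"
    unfolding centralizer_def Q
    by (simp add: om_sum_left om_sum_right om_const_left om_const_right pw_comm)
qed

lemma C_sub_K:
  assumes dP: "degree P = n" and n: "n \<ge> 1"
    and dv: "\<forall>Q \<in> centralizer \<sigma> \<delta> P. Q \<noteq> 0 \<longrightarrow> n dvd degree Q"
  shows "centralizer \<sigma> \<delta> P \<subseteq> K_poly_in \<sigma> \<delta> P"
proof -
  have P0: "P \<noteq> 0" using dP n by auto
  have "\<forall>Q. degree Q = m \<longrightarrow> Q \<in> centralizer \<sigma> \<delta> P \<longrightarrow> Q \<in> K_poly_in \<sigma> \<delta> P" for m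
  proof (induction m rule: less_induct)
    case (less m)
    show ?case
    proof (intro allI impI)
      fix Q assume dQ: "degree Q = m" and QC: "Q \<in> centralizer \<sigma> \<delta> P"
      show "Q \<in> K_poly_in \<sigma> \<delta> P"
      proof (cases "Q = 0")
        case True then show ?thesis using zero_K by simp
      next
        case False
        then obtain k where m: "m = n * k" using dv QC dQ by blast
        define R where "R = pw P k"
        have R0: "R \<noteq> 0" and dR: "degree R = m"
          using pw_deg[OF P0, of k] dP m by (auto simp: R_def)
        have RC: "R \<in> centralizer \<sigma> \<delta> P"
          unfolding centralizer_def R_def using pw_comm by simp
        have eqQ: "lead_coeff P * (\<sigma>^^n) (lead_coeff Q) = lead_coeff Q * (\<sigma>^^m) (lead_coeff P)"
          using om_top2[of Q P] om_top2[of P Q] QC dQ dP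
          by (simp add: centralizer_def add.commute)
        have eqR: "lead_coeff P * (\<sigma>^^n) (lead_coeff R) = lead_coeff R * (\<sigma>^^m) (lead_coeff P)"
          using om_top2[of R P] om_top2[of P R] RC dR dP
          by (simp add: centralizer_def add.commute)
        obtain c where c: "lead_coeff Q = smult c (lead_coeff R)"
          using lc_unique[OF n _ _ _ eqQ eqR] P0 False R0 by auto
        define Q' where "Q' = Q - smult [:c:] R"
        have Q'C: "Q' \<in> centralizer \<sigma> \<delta> P"
          using QC RC unfolding centralizer_def Q'_def
          by (simp add: om_diff_left om_diff_right om_const_left om_const_right)
        have cm: "coeff Q' m = 0" using c dQ dR by (simp add: Q'_def)
        have cgt: "\<forall>j>m. coeff Q' j = 0" using dQ dR by (simp add: Q'_def coeff_eq_0)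
        have QQ: "Q = Q' + smult [:c:] (pw P k)" by (simp add: Q'_def R_def)
        show ?thesis
        proof (cases "Q' = 0")
          case True then show ?thesis using QQ Kadd[OF zero_K] by simp
        next
          case False
          have "degree Q' \<le> m" using cgt by (rule degree_le)
          moreover have "degree Q' \<noteq> m" using cm False by (metis leading_coeff_0_iff)
          ultimately have "degree Q' < m" by simp
          then have "Q' \<in> K_poly_in \<sigma> \<delta> P" using less Q'C by blast
          then show ?thesis using QQ Kadd by simp
        qed
      qed
    qed
  qed
  then show ?thesis by blast
qed

end


theorem lemma5p2:
  fixes \<sigma> \<delta> :: "'k::field poly \<Rightarrow> 'k poly" and P :: "'k poly poly" and n :: nat
  assumes "K_alg_endo \<sigma>"
    and "degree (\<sigma> [:0, 1:]) > 1"
    and "K_sigma_derivation \<sigma> \<delta>"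
    and "degree P = n" and "n \<ge> 1"
    and "\<forall>Q \<in> centralizer \<sigma> \<delta> P. Q \<noteq> 0 \<longrightarrow> n dvd degree Q"
  shows "centralizer \<sigma> \<delta> P = K_poly_in \<sigma> \<delta> P"
proof -
  interpret ore \<sigma> \<delta>
    using assms(1,2,3) unfolding K_alg_endo_def K_sigma_derivation_def
    by unfold_locales blast+
  show ?thesis using K_sub_C C_sub_K[OF assms(4,5,6)] by blast
qed

end
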